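(* Let $W$ be a finite Weyl group and $\tilde W=W\ltimes Z$ its affine Weyl group, with elements written $(a,\mathbf u)$, $a\in W$, $\mathbf u\in Z$. Let $X$ be a conjugacy class of involutions of $\tilde W$, and for $x=(a,\mathbf u)\in X$ write $\hat x=a$; let $\hat X$ be the conjugacy class of $\hat x$ in $W$ (this does not depend on the choice of $x\in X$). Suppose $x,y\in X$. If $d(\hat x,\hat y)=k$ in $\mathcal{C}(W,\hat X)$, then $d(x,y)\ge k$ in $\mathcal{C}(\tilde W,X)$. If $\mathcal{C}(W,\hat X)$ is disconnected, then $\mathcal{C}(\tilde W,X)$ is disconnected.
   Context: $W$ is a finite Weyl group with root system $\Phi$ in a Euclidean space $V\cong\mathbb{R}^n$, $\alpha^\vee=2\alpha/\langle\alpha,\alpha\rangle$, and $Z$ is the coroot lattice $L(\Phi^\vee)$ viewed as a group of translations. The affine Weyl group $\tilde W$ is the semidirect product of $W$ and $Z$, with elements $(a,\mathbf u)$ and multiplication $(a,\mathbf u)(b,\mathbf v)=(ab,\mathbf u^b+\mathbf v)$, where $\mathbf u\mapsto\mathbf u^b$ denotes the (right) linear action of $W$ on $V$. For a group $G$ and a set $X$ of involutions, $\mathcal{C}(G,X)$ is the graph on $X$ with $x,y$ adjacent iff they commute, and $d(x,y)$ denotes graph distance. *)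

theory Defs
  imports "HOL-Analysis.Analysis" "HOL-Library.Extended_Nat"
begin

definition coroot :: "'a::euclidean_space \<Rightarrow> 'a" where
  "coroot \<alpha> = (2 / (\<alpha> \<bullet> \<alpha>)) *\<^sub>R \<alpha>"

definition refl :: "'a::euclidean_space \<Rightarrow> 'a \<Rightarrow> 'a" where
  "refl \<alpha> v = v - (v \<bullet> coroot \<alpha>) *\<^sub>R \<alpha>"

definition root_system :: "'a::euclidean_space set \<Rightarrow> bool" where
  "root_system \<Phi> \<longleftrightarrow>
     finite \<Phi> \<and> 0 \<notin> \<Phi> \<and> span \<Phi> = UNIV \<and>
     (\<forall>\<alpha>\<in>\<Phi>. refl \<alpha> ` \<Phi> \<subseteq> \<Phi>) \<and>
     (\<forall>\<alpha>\<in>\<Phi>. \<forall>\<beta>\<in>\<Phi>. \<beta> \<bullet> coroot \<alpha> \<in> \<int>) \<and>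
     (\<forall>\<alpha>\<in>\<Phi>. \<forall>c::real. c *\<^sub>R \<alpha> \<in> \<Phi> \<longrightarrow> c = 1 \<or> c = -1)"

text \<open>Elements of W are linear maps of V, acting on the right: u^b = b u.
  Hence the product ab (first a, then b) is the function b o a.\<close>

definition weyl :: "'a::euclidean_space set \<Rightarrow> ('a \<Rightarrow> 'a) set" where
  "weyl \<Phi> = {foldr (\<circ>) (map refl rs) id | rs. set rs \<subseteq> \<Phi>}"

definition weyl_mult :: "('a \<Rightarrow> 'a) \<Rightarrow> ('a \<Rightarrow> 'a) \<Rightarrow> ('a \<Rightarrow> 'a)" where
  "weyl_mult a b = b \<circ> a"

definition coroot_lattice :: "'a::euclidean_space set \<Rightarrow> 'a set" where
  "coroot_lattice \<Phi> = {(\<Sum>\<alpha>\<in>\<Phi>. of_int (c \<alpha>) *\<^sub>R coroot \<alpha>) | c. True}"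

definition aff_weyl :: "'a::euclidean_space set \<Rightarrow> (('a \<Rightarrow> 'a) \<times> 'a) set" where
  "aff_weyl \<Phi> = weyl \<Phi> \<times> coroot_lattice \<Phi>"

definition aff_mult :: "(('a::real_vector \<Rightarrow> 'a) \<times> 'a) \<Rightarrow> (('a \<Rightarrow> 'a) \<times> 'a) \<Rightarrow> (('a \<Rightarrow> 'a) \<times> 'a)" where
  "aff_mult x y = (weyl_mult (fst x) (fst y), fst y (snd x) + snd y)"

definition aff_one :: "('a \<Rightarrow> 'a) \<times> 'a::real_vector" where
  "aff_one = (id, 0)"

definition involution :: "'g set \<Rightarrow> ('g \<Rightarrow> 'g \<Rightarrow> 'g) \<Rightarrow> 'g \<Rightarrow> 'g \<Rightarrow> bool" where
  "involution G mul e x \<longleftrightarrow> x \<in> G \<and> x \<noteq> e \<and> mul x x = e"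

text \<open>Conjugacy class of x in G: all g x g^{-1}, written without inverses
  as the z with g x = z g.\<close>
definition conj_class :: "'g set \<Rightarrow> ('g \<Rightarrow> 'g \<Rightarrow> 'g) \<Rightarrow> 'g \<Rightarrow> 'g set" where
  "conj_class G mul x = {z \<in> G. \<exists>g\<in>G. mul g x = mul z g}"

definition cg_adj :: "('g \<Rightarrow> 'g \<Rightarrow> 'g) \<Rightarrow> 'g set \<Rightarrow> 'g \<Rightarrow> 'g \<Rightarrow> bool" where
  "cg_adj mul X x y \<longleftrightarrow> x \<in> X \<and> y \<in> X \<and> x \<noteq> y \<and> mul x y = mul y x"

definition cg_path :: "('g \<Rightarrow> 'g \<Rightarrow> 'g) \<Rightarrow> 'g set \<Rightarrow> 'g \<Rightarrow> 'g \<Rightarrow> nat \<Rightarrow> bool" where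
  "cg_path mul X x y k \<longleftrightarrow>
     (\<exists>p::nat \<Rightarrow> 'g. p 0 = x \<and> p k = y \<and> (\<forall>i\<le>k. p i \<in> X) \<and>
        (\<forall>i<k. cg_adj mul X (p i) (p (Suc i))))"

definition cg_dist :: "('g \<Rightarrow> 'g \<Rightarrow> 'g) \<Rightarrow> 'g set \<Rightarrow> 'g \<Rightarrow> 'g \<Rightarrow> enat" where
  "cg_dist mul X x y =
     (if \<exists>k. cg_path mul X x y k then enat (LEAST k. cg_path mul X x y k) else \<infinity>)"

definition cg_connected :: "('g \<Rightarrow> 'g \<Rightarrow> 'g) \<Rightarrow> 'g set \<Rightarrow> bool" where
  "cg_connected mul X \<longleftrightarrow> (\<forall>x\<in>X. \<forall>y\<in>X. cg_dist mul X x y \<noteq> \<infinity>)"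

end

theory Submission
  imports Defs
begin

lemma proj_path:
  assumes XY: "\<forall>z\<in>X. f z \<in> Y"
    and comm: "\<forall>u v. mul u v = mul v u \<longrightarrow> mul' (f u) (f v) = mul' (f v) (f u)"
  shows "cg_path mul X x y m \<Longrightarrow> \<exists>j\<le>m. cg_path mul' Y (f x) (f y) j"
proof (induction m arbitrary: y)
  case 0
  then obtain p where p: "p 0 = x" "p 0 = y" "p 0 \<in> X" unfolding cg_path_def by auto
  hence "cg_path mul' Y (f x) (f y) 0" unfolding cg_path_def
    using XY by (rule_tac x="\<lambda>_. f x" in exI) auto
  thus ?case by auto
next
  case (Suc m)
  then obtain p where p: "p 0 = x" "p (Suc m) = y" "\<forall>i\<le>Suc m. p i \<in> X"
    "\<forall>i<Suc m. cg_adj mul X (p i) (p (Suc i))" unfolding cg_path_def by blast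
  have "cg_path mul X x (p m) m" unfolding cg_path_def using p
    by (rule_tac x=p in exI) auto
  from Suc.IH[OF this] obtain j q where j: "j \<le> m" and q: "q 0 = f x" "q j = f (p m)"
    "\<forall>i\<le>j. q i \<in> Y" "\<forall>i<j. cg_adj mul' Y (q i) (q (Suc i))"
    unfolding cg_path_def by blast
  show ?case
  proof (cases "f (p m) = f y")
    case True
    then show ?thesis using j q unfolding cg_path_def
      by (rule_tac x=j in exI) (auto intro!: exI[of _ q])
  next
    case False
    have ad: "cg_adj mul X (p m) y" using p(4) p(2) by auto
    have "cg_adj mul' Y (f (p m)) (f y)" using ad False XY comm unfolding cg_adj_def by auto
    hence "cg_path mul' Y (f x) (f y) (Suc j)" unfolding cg_path_def using q XY
      apply (rule_tac x="q(Suc j := f y)" in exI)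
      apply (auto simp: cg_adj_def less_Suc_eq le_Suc_eq)
      done
    thus ?thesis using j by auto
  qed
qed

definition F :: "'a::euclidean_space list \<Rightarrow> 'a \<Rightarrow> 'a" where
  "F rs = foldr (\<circ>) (map refl rs) id"

lemma refl_refl:
  assumes "(\<alpha>::'a::euclidean_space) \<noteq> 0"
  shows "refl \<alpha> (refl \<alpha> v) = v"
proof -
  have a: "\<alpha> \<bullet> \<alpha> \<noteq> 0" using assms by simp
  have "\<alpha> \<bullet> coroot \<alpha> = 2" using a unfolding coroot_def by (simp add: inner_commute)
  thus ?thesis unfolding refl_def by (simp add: inner_diff_left algebra_simps)
qed

lemma refl_inner:
  assumes "(\<alpha>::'a::euclidean_space) \<noteq> 0"
  shows "refl \<alpha> v \<bullet> refl \<alpha> v = v \<bullet> v"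
proof -
  have a: "\<alpha> \<bullet> \<alpha> \<noteq> 0" using assms by simp
  show ?thesis unfolding refl_def coroot_def using a
    by (simp add: inner_diff_left inner_diff_right algebra_simps power2_eq_square field_simps inner_commute)
qed

lemma refl_coroot:
  assumes "(\<alpha>::'a::euclidean_space) \<noteq> 0"
  shows "refl \<alpha> (coroot \<beta>) = coroot (refl \<alpha> \<beta>)"
  unfolding coroot_def refl_inner[OF assms]
  by (simp add: refl_def algebra_simps inner_scaleR_left)

lemma refl_lin: "refl \<alpha> (a + b) = refl \<alpha> a + refl \<alpha> b" "refl \<alpha> (c *\<^sub>R a) = c *\<^sub>R refl \<alpha> a"
  "refl \<alpha> 0 = 0"
  by (simp_all add: refl_def inner_add_left algebra_simps)

lemma refl_sum: "refl \<alpha> (sum g A) = sum (\<lambda>i. refl \<alpha> (g i)) A"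
  by (induction A rule: infinite_finite_induct) (auto simp: refl_lin)

lemma refl_lattice:
  assumes rs: "root_system \<Phi>" and al: "\<alpha> \<in> \<Phi>" and w: "w \<in> coroot_lattice \<Phi>"
  shows "refl \<alpha> w \<in> coroot_lattice \<Phi>"
proof -
  have fin: "finite \<Phi>" and n0: "0 \<notin> \<Phi>" and cl: "refl \<alpha> ` \<Phi> \<subseteq> \<Phi>"
    using rs al unfolding root_system_def by auto
  have a0: "\<alpha> \<noteq> 0" using n0 al by auto
  have inj: "inj_on (refl \<alpha>) \<Phi>"
    by (metis inj_on_inverseI refl_refl[OF a0])
  have bij: "bij_betw (refl \<alpha>) \<Phi> \<Phi>"
    using inj cl fin by (simp add: bij_betw_def endo_inj_surj)
  obtain c where c: "w = (\<Sum>\<beta>\<in>\<Phi>. of_int (c \<beta>) *\<^sub>R coroot \<beta>)"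
    using w unfolding coroot_lattice_def by auto
  have "refl \<alpha> w = (\<Sum>\<beta>\<in>\<Phi>. of_int (c \<beta>) *\<^sub>R coroot (refl \<alpha> \<beta>))"
    unfolding c refl_sum refl_lin refl_coroot[OF a0] ..
  also have "\<dots> = (\<Sum>\<gamma>\<in>\<Phi>. of_int (c (refl \<alpha> \<gamma>)) *\<^sub>R coroot \<gamma>)"
  proof -
    have "(\<Sum>\<gamma>\<in>\<Phi>. of_int (c (refl \<alpha> \<gamma>)) *\<^sub>R coroot \<gamma>)
        = (\<Sum>\<beta>\<in>\<Phi>. of_int (c (refl \<alpha> (refl \<alpha> \<beta>))) *\<^sub>R coroot (refl \<alpha> \<beta>))"
      using sum.reindex_bij_betw[OF bij, of "\<lambda>\<gamma>. of_int (c (refl \<alpha> \<gamma>)) *\<^sub>R coroot \<gamma>"]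
      by simp
    thus ?thesis by (simp add: refl_refl[OF a0])
  qed
  finally show ?thesis unfolding coroot_lattice_def
    by (intro CollectI exI[of _ "\<lambda>\<gamma>. c (refl \<alpha> \<gamma>)"]) simp
qed

lemma F_lattice:
  assumes rs: "root_system \<Phi>"
  shows "set l \<subseteq> \<Phi> \<Longrightarrow> w \<in> coroot_lattice \<Phi> \<Longrightarrow> F l w \<in> coroot_lattice \<Phi>"
  by (induction l arbitrary: w) (auto simp: F_def refl_lattice[OF rs])

lemma foldr_comp: "foldr (\<circ>) fs h = foldr (\<circ>) fs id \<circ> h"
  by (induction fs) auto

lemma F_inv:
  assumes rs: "root_system \<Phi>"
  shows "set l \<subseteq> \<Phi> \<Longrightarrow> F (rev l) (F l w) = w"
proof (induction l arbitrary: w)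
  case Nil then show ?case by (simp add: F_def)
next
  case (Cons r l)
  have "r \<noteq> 0" using Cons.prems rs unfolding root_system_def by auto
  then show ?case using Cons by (simp add: F_def foldr_append refl_refl foldr_comp[of _ "refl r"])
qed

lemma F_zero: "F l 0 = 0"
  by (induction l) (auto simp: F_def refl_lin)

lemma zero_lattice: "0 \<in> coroot_lattice \<Phi>"
  unfolding coroot_lattice_def by (rule CollectI, rule exI[of _ "\<lambda>_. 0"]) simp

theorem lemma2p1:
  fixes \<Phi> :: "'a::euclidean_space set"
    and x0 x y :: "('a \<Rightarrow> 'a) \<times> 'a"
  assumes "root_system \<Phi>"
    and "involution (aff_weyl \<Phi>) aff_mult aff_one x0"
    and "X = conj_class (aff_weyl \<Phi>) aff_mult x0"
    and "Xh = conj_class (weyl \<Phi>) weyl_mult (fst x0)"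
    and "x \<in> X" and "y \<in> X"
  shows "(\<forall>k::nat. cg_dist weyl_mult Xh (fst x) (fst y) = enat k
                  \<longrightarrow> cg_dist aff_mult X x y \<ge> enat k)
         \<and> (\<not> cg_connected weyl_mult Xh \<longrightarrow> \<not> cg_connected aff_mult X)"
proof -
  note rs = assms(1)
  have XY: "\<forall>z\<in>X. fst z \<in> Xh"
  proof
    fix z assume zX: "z \<in> X"
    have "z \<in> conj_class (aff_weyl \<Phi>) aff_mult x0" using zX assms(3) by simp
    then obtain g where h: "z \<in> aff_weyl \<Phi>" "g \<in> aff_weyl \<Phi>" "aff_mult g x0 = aff_mult z g"
      unfolding conj_class_def by blast
    have "fst (aff_mult g x0) = fst (aff_mult z g)" using h(3) by (rule arg_cong)
    hence e: "weyl_mult (fst g) (fst x0) = weyl_mult (fst z) (fst g)" by (simp only: aff_mult_def fst_conv)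
    have "fst z \<in> weyl \<Phi>" "fst g \<in> weyl \<Phi>" using h(1,2) unfolding aff_weyl_def by (auto simp: mem_Times_iff)
    thus "fst z \<in> Xh" using e assms(4) unfolding conj_class_def by blast
  qed
  have comm: "\<forall>u v :: ('a \<Rightarrow> 'a) \<times> 'a. aff_mult u v = aff_mult v u \<longrightarrow>
      weyl_mult (fst u) (fst v) = weyl_mult (fst v) (fst u)"
  proof (intro allI impI)
    fix u v :: "('a \<Rightarrow> 'a) \<times> 'a"
    assume "aff_mult u v = aff_mult v u"
    hence "fst (aff_mult u v) = fst (aff_mult v u)" by (rule arg_cong)
    thus "weyl_mult (fst u) (fst v) = weyl_mult (fst v) (fst u)" by (simp only: aff_mult_def fst_conv)
  qed
  note pp = proj_path[where X=X and f=fst and Y=Xh and mul=aff_mult and mul'=weyl_mult, OF XY comm]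
  have P1: "\<forall>k::nat. cg_dist weyl_mult Xh (fst x) (fst y) = enat k
                  \<longrightarrow> cg_dist aff_mult X x y \<ge> enat k"
  proof (intro allI impI)
    fix k assume k: "cg_dist weyl_mult Xh (fst x) (fst y) = enat k"
    show "cg_dist aff_mult X x y \<ge> enat k"
    proof (cases "\<exists>m. cg_path aff_mult X x y m")
      case False thus ?thesis by (simp add: cg_dist_def)
    next
      case True
      let ?m = "LEAST m. cg_path aff_mult X x y m"
      have "cg_path aff_mult X x y ?m" using True by (rule LeastI_ex)
      from pp[OF this] obtain j where j: "j \<le> ?m" "cg_path weyl_mult Xh (fst x) (fst y) j" by blast
      have ex: "\<exists>k. cg_path weyl_mult Xh (fst x) (fst y) k" using j(2) by blast
      have "cg_dist weyl_mult Xh (fst x) (fst y) = enat (LEAST k. cg_path weyl_mult Xh (fst x) (fst y) k)"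
        unfolding cg_dist_def using ex by (rule if_P)
      hence kk: "k = (LEAST k. cg_path weyl_mult Xh (fst x) (fst y) k)" using k by simp
      have "k \<le> j" unfolding kk using j(2) by (rule Least_le)
      have d: "cg_dist aff_mult X x y = enat ?m"
        unfolding cg_dist_def using True by (rule if_P)
      show ?thesis unfolding d using \<open>k \<le> j\<close> j(1) by simp
    qed
  qed
  have lift: "\<exists>z\<in>X. fst z = a" if a: "a \<in> Xh" for a
  proof -
    obtain g where g: "a \<in> weyl \<Phi>" "g \<in> weyl \<Phi>" "weyl_mult g (fst x0) = weyl_mult a g"
      using a assms(4) unfolding conj_class_def by auto
    obtain l where l: "set l \<subseteq> \<Phi>" "g = F l" using g(2) unfolding weyl_def F_def by auto
    obtain l0 where l0: "set l0 \<subseteq> \<Phi>" "fst x0 = F l0" "snd x0 \<in> coroot_lattice \<Phi>"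
    proof -
      have "x0 \<in> aff_weyl \<Phi>" using assms(2) unfolding involution_def by blast
      hence "fst x0 \<in> weyl \<Phi>" "snd x0 \<in> coroot_lattice \<Phi>" unfolding aff_weyl_def by (auto simp: mem_Times_iff)
      thus ?thesis using that unfolding weyl_def F_def by blast
    qed
    define w where "w = F (rev l) (snd x0)"
    have wl: "w \<in> coroot_lattice \<Phi>" unfolding w_def using F_lattice[OF rs] l l0 by auto
    have gw: "g w = snd x0" unfolding w_def l(2) using F_inv[OF rs, of "rev l"] l by simp
    have x0W: "x0 \<in> aff_weyl \<Phi>" using assms(2) unfolding involution_def by auto
    have "(a, w) \<in> X" unfolding assms(3) conj_class_def
    proof (intro CollectI conjI bexI[of _ "(g, 0)"])
      show "(a, w) \<in> aff_weyl \<Phi>" using g wl by (simp add: aff_weyl_def)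
      show "(g, 0) \<in> aff_weyl \<Phi>" using g zero_lattice by (simp add: aff_weyl_def)
      show "aff_mult (g, 0) x0 = aff_mult (a, w) (g, 0)"
        using g(3) gw l0(2) by (simp add: aff_mult_def F_zero)
    qed
    thus ?thesis by force
  qed
  have P2: "\<not> cg_connected weyl_mult Xh \<longrightarrow> \<not> cg_connected aff_mult X"
  proof (intro impI notI)
    assume nc: "\<not> cg_connected weyl_mult Xh" and c: "cg_connected aff_mult X"
    then obtain a b where ab: "a \<in> Xh" "b \<in> Xh" "cg_dist weyl_mult Xh a b = \<infinity>"
      unfolding cg_connected_def by auto
    obtain x' y' where xy: "x' \<in> X" "y' \<in> X" "fst x' = a" "fst y' = b"
      using lift ab by metis
    have "cg_dist aff_mult X x' y' \<noteq> \<infinity>" using c xy unfolding cg_connected_def by auto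
    then obtain m where "cg_path aff_mult X x' y' m" unfolding cg_dist_def by (auto split: if_splits)
    from pp[OF this] obtain j where "cg_path weyl_mult Xh a b j" using xy by auto
    hence "cg_dist weyl_mult Xh a b \<noteq> \<infinity>" unfolding cg_dist_def by auto
    thus False using ab by simp
  qed
  show ?thesis using P1 P2 by blast
qed

end
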